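(* Let $\mathcal{D}$ be a probability distribution, and for each $\xi\sim\mathcal{D}$ let $f_\xi:\mathbb{R}^d\to\mathbb{R}$ be differentiable and $\mu$-strongly convex with a common constant $\mu>0$, i.e. $f_\xi(y)+\langle\nabla f_\xi(y),x-y\rangle+\frac{\mu}{2}\|x-y\|^2\le f_\xi(x)$ for all $x,y\in\mathbb{R}^d$. Let $f(x)=\mathbb{E}_{\xi\sim\mathcal{D}}[f_\xi(x)]$ and let $x_\star$ be its unique minimizer. Let $\{x_k,\phi_k,h_k\}$ be produced by SPPM-LC (see context) and suppose the $\sigma_k^2$-assumption (see context) holds with function $\sigma^2:\mathbb{R}^m\to\mathbb{R}_+$ and constants $A_1,B_1,C_1,A_2,B_2,C_2\ge 0$, $B_2<1$. Choose any $\gamma>0$ and $\alpha>0$ satisfying $$\frac{(1+\gamma^2A_1)(1+\alpha A_2)}{(1+\gamma\mu)^2}<1,\qquad \frac{\gamma^2B_1(1+\alpha A_2)}{\alpha(1+\gamma\mu)^2}+B_2<1,$$ and define $\Psi_k:=\|x_k-x_\star\|^2+\alpha\sigma_k^2$, where $\sigma_k^2=\sigma^2(\phi_k)$. Then for all $k\ge 0$, $$\mathbb{E}[\Psi_k]\le\theta^k\Psi_0+\frac{\zeta}{1-\theta},$$ where $$\theta=\max\left\{\frac{(1+\gamma^2A_1)(1+\alpha A_2)}{(1+\gamma\mu)^2},\ \frac{\gamma^2B_1(1+\alpha A_2)}{\alpha(1+\gamma\mu)^2}+B_2\right\}\in[0,1),\qquad \zeta=\frac{\gamma^2C_1(1+\alpha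 A_2)}{(1+\gamma\mu)^2}+\alpha C_2\ge 0.$$
   Context: Notation: $\operatorname{prox}_{\gamma\phi}(y):=\arg\min_{x\in\mathbb{R}^d}\{\phi(x)+\frac{1}{2\gamma}\|x-y\|^2\}$. It is assumed that differentiation and expectation can be interchanged, so $\nabla f(x)=\mathbb{E}_{\xi\sim\mathcal{D}}[\nabla f_\xi(x)]$. Algorithm SPPM-LC (Stochastic Proximal Point Method with Learned Correction): parameters $\gamma>0$, starting point $x_0\in\mathbb{R}^d$, control vector $\phi_0\in\mathbb{R}^m$. For $k=0,1,2,\dots$: sample $\xi_k\sim\mathcal{D}$ (independently of the past); form a correction vector $h_k\in\mathbb{R}^d$ as a function of $x_k$, $\phi_k$ and $\xi_k$; set $x_{k+1}=\operatorname{prox}_{\gamma f_{\xi_k}}(x_k+\gamma h_k)$; construct a new (possibly random) control vector $\phi_{k+1}\in\mathbb{R}^m$. $\sigma_k^2$-assumption: there exist a function $\sigma^2:\mathbb{R}^m\to\mathbb{R}_+$ and nonnegative constants $A_1,B_1,C_1,A_2,B_2,C_2$ with $B_2<1$ such that, writing $\sigma_k^2:=\sigma^2(\phi_k)$, for all $k\ge0$: (i) $\mathbb{E}[h_k\mid x_k,\phi_k]=0$; (ii) $\mathbb{E}[\|h_k-\nabla f_{\xi_k}(x_\star)\|^2\mid x_k,\phi_k]\le A_1\|x_k-x_\star\|^2+B_1\sigma_k^2+C_1$; (iii) $\mathbb{E}[\sigma_{k+1}^2\mid x_{k+1},\phi_k]\le A_2\|x_{k+1}-x_\star\|^2+B_2\sigma_k^2+C_2$.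 *)

theory Defs
  imports "HOL-Analysis.Analysis" "HOL-Probability.Probability"
begin

definition prox :: "real \<Rightarrow> ('a::real_normed_vector \<Rightarrow> real) \<Rightarrow> 'a \<Rightarrow> 'a" where
  "prox \<gamma> \<phi> y = (ARG_MIN (\<lambda>x. \<phi> x + (1 / (2 * \<gamma>)) * (norm (x - y))\<^sup>2) x. True)"

definition gen_alg :: "'w measure \<Rightarrow> ('w \<Rightarrow> 'b::topological_space) \<Rightarrow> 'w measure" where
  "gen_alg M Y = vimage_algebra (space M) Y borel"

text \<open>Events of the past of SPPM-LC before sampling xi_k:
  generated by x_0..x_k, phi_0..phi_k, xi_0..xi_(k-1), h_0..h_(k-1).\<close>
definition past_events ::
  "'w measure \<Rightarrow> 'xi measure \<Rightarrow> (nat \<Rightarrow> 'w \<Rightarrow> 'a::topological_space) \<Rightarrow> (nat \<Rightarrow> 'w \<Rightarrow> 'c::topological_space)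
    \<Rightarrow> (nat \<Rightarrow> 'w \<Rightarrow> 'xi) \<Rightarrow> (nat \<Rightarrow> 'w \<Rightarrow> 'a) \<Rightarrow> nat \<Rightarrow> 'w set set" where
  "past_events M D x \<phi> \<xi> h k = sigma_sets (space M)
     ((\<Union>j\<le>k. {x j -` A \<inter> space M | A. A \<in> sets borel})
    \<union> (\<Union>j\<le>k. {\<phi> j -` A \<inter> space M | A. A \<in> sets borel})
    \<union> (\<Union>j<k. {\<xi> j -` A \<inter> space M | A. A \<in> sets D})
    \<union> (\<Union>j<k. {h j -` A \<inter> space M | A. A \<in> sets borel}))"

end

theory Submission
  imports Defs
begin


lemma grad_zero_at_min:
  fixes F :: "'a::euclidean_space \<Rightarrow> real"
  assumes "GDERIV F p :> G" and "\<And>u. F p \<le> F u"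
  shows "G = 0"
proof -
  have "(\<lambda>h. inner h G) = (\<lambda>h. 0)"
    using assms(1) unfolding gderiv_def
    by (rule has_derivative_local_min) (simp add: assms(2))
  then have "inner G G = 0" by metis
  then show ?thesis by simp
qed

lemma contraction_alg:
  fixes a b :: "'a::real_inner"
  assumes "inner a b \<ge> \<mu> * (norm a)\<^sup>2" "\<mu> > 0" "\<gamma> > 0"
  shows "(1 + \<gamma> * \<mu>)\<^sup>2 * (norm a)\<^sup>2 \<le> (norm (a + \<gamma> *\<^sub>R b))\<^sup>2"
proof -
  have cs: "inner a b \<le> norm a * norm b" by (rule norm_cauchy_schwarz)
  have nb: "\<mu> * norm a \<le> norm b"
  proof (cases "norm a = 0")
    case True then show ?thesis by simp
  next
    case False
    then have "norm a > 0" by simp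
    have "norm a * (\<mu> * norm a) \<le> norm a * norm b"
      using assms(1) cs by (simp add: power2_eq_square algebra_simps)
    then show ?thesis using \<open>norm a > 0\<close> by simp
  qed
  have "(\<mu> * norm a)\<^sup>2 \<le> (norm b)\<^sup>2"
    using nb assms(2) by (intro power_mono) auto
  have "(norm (a + \<gamma> *\<^sub>R b))\<^sup>2 = (norm a)\<^sup>2 + 2 * \<gamma> * inner a b + \<gamma>\<^sup>2 * (norm b)\<^sup>2"
    unfolding power2_norm_eq_inner by (simp add: inner_add_left inner_add_right inner_commute[of b a] power2_eq_square algebra_simps)
  also have "\<dots> \<ge> (norm a)\<^sup>2 + 2 * \<gamma> * (\<mu> * (norm a)\<^sup>2) + \<gamma>\<^sup>2 * (\<mu> * norm a)\<^sup>2"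
    using assms \<open>(\<mu> * norm a)\<^sup>2 \<le> (norm b)\<^sup>2\<close>
    by (intro add_mono mult_left_mono) auto
  finally show ?thesis by (simp add: power2_eq_square algebra_simps)
qed

lemma prox_opt:
  fixes F :: "'a::euclidean_space \<Rightarrow> real" and G :: "'a \<Rightarrow> 'a"
  assumes grad: "\<And>y. GDERIV F y :> G y"
    and strong: "\<And>u y. F y + inner (G y) (u - y) + \<mu> / 2 * (norm (u - y))\<^sup>2 \<le> F u"
    and mu: "\<mu> > 0" and gam: "\<gamma> > 0"
  shows "y - prox \<gamma> F y = \<gamma> *\<^sub>R G (prox \<gamma> F y)"
proof -
  define Q where "Q = (\<lambda>x. F x + (1 / (2 * \<gamma>)) * (norm (x - y))\<^sup>2)"
  have contF: "continuous_on UNIV F"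
    using grad unfolding gderiv_def
    by (meson continuous_at_imp_continuous_on has_derivative_continuous)
  have contQ: "continuous_on UNIV Q" unfolding Q_def
    by (intro continuous_intros contF)
  define K where "K = {x. Q x \<le> Q y}"
  have "closed K" unfolding K_def by (intro closed_Collect_le contQ continuous_intros)
  moreover have "K \<subseteq> cball y (2 * \<gamma> * norm (G y))"
  proof
    fix u assume "u \<in> K"
    then have Qu: "Q u \<le> F y" by (simp add: K_def Q_def)
    have "0 \<le> \<mu> / 2 * (norm (u - y))\<^sup>2" using mu by simp
    then have "F y + inner (G y) (u - y) \<le> F u" using strong[of y u] by linarith
    moreover have "- (norm (G y) * norm (u - y)) \<le> inner (G y) (u - y)"
      using norm_cauchy_schwarz[of "G y" "-(u - y)"] by (simp only: inner_minus_right norm_minus_cancel)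
    ultimately have "(1 / (2 * \<gamma>)) * (norm (u - y))\<^sup>2 \<le> norm (G y) * norm (u - y)"
      using Qu unfolding Q_def by linarith
    then have "(norm (u - y)) * norm (u - y) \<le> (2 * \<gamma> * norm (G y)) * norm (u - y)"
      using gam by (simp add: field_simps power2_eq_square)
    then have "norm (u - y) \<le> 2 * \<gamma> * norm (G y)"
      using gam by (cases "norm (u - y) = 0") (auto simp: mult_le_cancel_right)
    then show "u \<in> cball y (2 * \<gamma> * norm (G y))" by (simp add: dist_norm norm_minus_commute)
  qed
  ultimately have "compact K" by (meson bounded_cball bounded_subset compact_eq_bounded_closed)
  moreover have "K \<noteq> {}" unfolding K_def by auto
  ultimately obtain p where "p \<in> K" and pm: "\<forall>u\<in>K. Q p \<le> Q u"
    using continuous_attains_inf[of K Q] contQ continuous_on_subset by blast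
  have pmin: "\<And>u. Q p \<le> Q u"
  proof -
    fix u show "Q p \<le> Q u"
      using pm \<open>p \<in> K\<close> by (cases "u \<in> K") (auto simp: K_def)
  qed
  have ex: "is_arg_min Q (\<lambda>x. True) p" using pmin by (simp add: is_arg_min_def not_less)
  define p' where "p' = prox \<gamma> F y"
  have "is_arg_min Q (\<lambda>x. True) p'"
    unfolding p'_def prox_def arg_min_def Q_def[symmetric] using ex by (rule someI)
  then have pmin': "\<And>u. Q p' \<le> Q u" by (simp add: is_arg_min_def not_less)
  have "GDERIV Q p' :> G p' + (1 / \<gamma>) *\<^sub>R (p' - y)"
    unfolding gderiv_def Q_def power2_norm_eq_inner
    using grad[of p', unfolded gderiv_def]
    using gam by (auto intro!: derivative_eq_intros ext simp: inner_add_right inner_diff_left inner_diff_right inner_commute field_simps power2_eq_square)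
  then have "G p' + (1 / \<gamma>) *\<^sub>R (p' - y) = 0" using pmin' by (rule grad_zero_at_min)
  then have "\<gamma> *\<^sub>R (G p' + (1 / \<gamma>) *\<^sub>R (p' - y)) = 0" by simp
  then show ?thesis using gam by (simp add: p'_def[symmetric] algebra_simps)
qed



lemma gen_alg_sfs:
  assumes "prob_space M" "Y \<in> borel_measurable M"
  shows "sigma_finite_subalgebra M (gen_alg M Y)"
proof -
  interpret prob_space M by fact
  have "subalgebra M (gen_alg M Y)"
    unfolding subalgebra_def gen_alg_def
    using sets_image_in_sets[OF refl assms(2)] by simp
  then have "finite_measure_subalgebra M (gen_alg M Y)"
    unfolding finite_measure_subalgebra_def finite_measure_subalgebra_axioms_def
    using finite_measure_axioms by auto
  then show ?thesis by (rule finite_measure_subalgebra_is_sigma_finite)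
qed

lemma gen_alg_meas:
  assumes "u \<in> borel_measurable borel"
  shows "(\<lambda>w. u (Y w)) \<in> borel_measurable (gen_alg M Y)"
  unfolding gen_alg_def
  by (rule measurable_compose[OF measurable_vimage_algebra1 assms]) simp

lemma nn_to_int:
  fixes f :: "'w \<Rightarrow> real"
  assumes "f \<in> borel_measurable M" "\<And>x. 0 \<le> f x" "(\<integral>\<^sup>+x. ennreal (f x) \<partial>M) \<le> ennreal c" "0 \<le> c"
  shows "integrable M f" "integral\<^sup>L M f \<le> c"
proof -
  show i: "integrable M f"
    using assms by (intro integrableI_nonneg) (auto simp: top_unique dest: order.strict_trans1[OF assms(3)] intro: le_less_trans[OF assms(3)])
  have "(\<integral>\<^sup>+x. ennreal (f x) \<partial>M) = ennreal (integral\<^sup>L M f)"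
    using i assms by (intro nn_integral_eq_integral) auto
  then show "integral\<^sup>L M f \<le> c" using assms(3,4) by simp
qed

lemma test_pair:
  fixes x :: "'w \<Rightarrow> 'a::euclidean_space" and p :: "'w \<Rightarrow> 'c::euclidean_space"
  assumes [measurable]: "x \<in> borel_measurable M" "p \<in> borel_measurable M"
  shows "(\<lambda>w. (x w, p w)) \<in> borel_measurable M"
  by measurable

lemma test_cont:
  fixes xs e :: "'a::euclidean_space"
  shows "(\<lambda>q::'a \<times> 'c::euclidean_space. inner (fst q - xs) e) \<in> borel_measurable borel"
  by (intro borel_measurable_continuous_onI continuous_intros)

lemma (in prob_space) indep_set_mono':
  assumes "indep_set A B" "A' \<subseteq> A" "B' \<subseteq> B"
  shows "indep_set A' B'"
  using assms unfolding indep_sets2_eq by (meson subset_iff order_trans)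

lemma (in prob_space) indep_var_from_sets:
  assumes "random_variable S X" "random_variable T Y"
    "indep_set (sigma_sets (space M) { X -` A \<inter> space M | A. A \<in> sets S})
      (sigma_sets (space M) { Y -` A \<inter> space M | A. A \<in> sets T})"
  shows "indep_var S X T Y"
  using assms unfolding indep_var_eq by (intro conjI) auto

lemma le_one_plus_sq: "(t::real) \<le> 1 + t\<^sup>2"
proof -
  have "0 \<le> (t - 1/2)\<^sup>2" by simp
  then show ?thesis unfolding power2_eq_square by (simp add: algebra_simps)
qed

lemma s3alg:
  fixes K c E S \<alpha> g2 A1 B1 C1 B2 C2 :: real
  assumes "c > 0" "\<alpha> > 0"
  shows "K * ((E + g2 * (A1 * E + B1 * S + C1)) / c) + \<alpha> * B2 * S + \<alpha> * C2
     = ((1 + g2 * A1) * K / c) * E + (\<alpha> * (g2 * B1 * K / (\<alpha> * c) + B2)) * S + (g2 * C1 * K / c + \<alpha> * C2)"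
proof -
  have 1: "\<alpha> * (g2 * B1 * K / (\<alpha> * c) + B2) = g2 * B1 * K / c + \<alpha> * B2"
    using assms by (simp add: field_simps)
  have 2: "K * ((E + g2 * (A1 * E + B1 * S + C1)) / c) = ((1 + g2 * A1) * K / c) * E + (g2 * B1 * K / c) * S + g2 * C1 * K / c"
    using assms by (simp add: field_simps)
  show ?thesis unfolding 1 2 by (simp add: algebra_simps)
qed



theorem theorem1:
  fixes M :: "'w measure" and D :: "'xi measure"
    and f :: "'xi \<Rightarrow> 'a::euclidean_space \<Rightarrow> real"
    and g :: "'xi \<Rightarrow> 'a \<Rightarrow> 'a"
    and \<mu> \<gamma> \<alpha> A1 B1 C1 A2 B2 C2 \<theta> \<zeta> :: real
    and xs x0 :: 'a and \<phi>0 :: "'c::euclidean_space"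
    and x :: "nat \<Rightarrow> 'w \<Rightarrow> 'a" and \<phi> :: "nat \<Rightarrow> 'w \<Rightarrow> 'c"
    and \<xi> :: "nat \<Rightarrow> 'w \<Rightarrow> 'xi" and h :: "nat \<Rightarrow> 'w \<Rightarrow> 'a"
    and H :: "nat \<Rightarrow> 'a \<Rightarrow> 'c \<Rightarrow> 'xi \<Rightarrow> 'a"
    and \<sigma>2 :: "'c \<Rightarrow> real"
  assumes M: "prob_space M" and D: "prob_space D"
    \<comment> \<open>each f_xi is differentiable with gradient g xi, and mu-strongly convex\<close>
    and grad: "\<And>s y. s \<in> space D \<Longrightarrow> GDERIV (f s) y :> g s y"
    and mu_pos: "\<mu> > 0"
    and strong: "\<And>s u y. s \<in> space D \<Longrightarrow>
        f s y + inner (g s y) (u - y) + \<mu> / 2 * (norm (u - y))\<^sup>2 \<le> f s u"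
    \<comment> \<open>f = E[f_xi], with differentiation and expectation interchangeable\<close>
    and f_meas: "\<And>y. (\<lambda>s. f s y) \<in> borel_measurable D"
    and f_int: "\<And>y. integrable D (\<lambda>s. f s y)"
    and g_int: "\<And>y. integrable D (\<lambda>s. g s y)"
    and interchange: "\<And>y. GDERIV (\<lambda>z. \<integral>s. f s z \<partial>D) y :> (\<integral>s. g s y \<partial>D)"
    \<comment> \<open>xs is the unique minimizer of f\<close>
    and xs_min: "\<And>y. y \<noteq> xs \<Longrightarrow> (\<integral>s. f s xs \<partial>D) < (\<integral>s. f s y \<partial>D)"
    \<comment> \<open>the SPPM-LC iteration\<close>
    and gamma_pos: "\<gamma> > 0"
    and x_meas: "\<And>k. x k \<in> borel_measurable M"
    and phi_meas: "\<And>k. \<phi> k \<in> borel_measurable M"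
    and h_meas: "\<And>k. h k \<in> borel_measurable M"
    and xi_meas: "\<And>k. \<xi> k \<in> measurable M D"
    and xi_distr: "\<And>k. distr M D (\<xi> k) = D"
    and xi_indep: "\<And>k. prob_space.indep_set M
         {\<xi> k -` A \<inter> space M | A. A \<in> sets D} (past_events M D x \<phi> \<xi> h k)"
    and x_init: "\<And>w. w \<in> space M \<Longrightarrow> x 0 w = x0"
    and phi_init: "\<And>w. w \<in> space M \<Longrightarrow> \<phi> 0 w = \<phi>0"
    and h_def: "\<And>k w. w \<in> space M \<Longrightarrow> h k w = H k (x k w) (\<phi> k w) (\<xi> k w)"
    and x_step: "\<And>k w. w \<in> space M \<Longrightarrow>
        x (Suc k) w = prox \<gamma> (f (\<xi> k w)) (x k w + \<gamma> *\<^sub>R h k w)"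
    \<comment> \<open>the sigma_k^2-assumption\<close>
    and sigma_nonneg: "\<And>c. \<sigma>2 c \<ge> 0"
    and sigma_meas: "\<sigma>2 \<in> borel_measurable borel"
    and consts_nonneg: "A1 \<ge> 0" "B1 \<ge> 0" "C1 \<ge> 0" "A2 \<ge> 0" "B2 \<ge> 0" "C2 \<ge> 0"
    and B2_lt: "B2 < 1"
    and ass_i: "\<And>k b. b \<in> Basis \<Longrightarrow>
        AE w in M. real_cond_exp M (gen_alg M (\<lambda>w. (x k w, \<phi> k w))) (\<lambda>w. inner (h k w) b) w = 0"
    and ass_ii: "\<And>k. AE w in M.
        nn_cond_exp M (gen_alg M (\<lambda>w. (x k w, \<phi> k w)))
          (\<lambda>w. ennreal ((norm (h k w - g (\<xi> k w) xs))\<^sup>2)) w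
        \<le> ennreal (A1 * (norm (x k w - xs))\<^sup>2 + B1 * \<sigma>2 (\<phi> k w) + C1)"
    and ass_iii: "\<And>k. AE w in M.
        nn_cond_exp M (gen_alg M (\<lambda>w. (x (Suc k) w, \<phi> k w)))
          (\<lambda>w. ennreal (\<sigma>2 (\<phi> (Suc k) w))) w
        \<le> ennreal (A2 * (norm (x (Suc k) w - xs))\<^sup>2 + B2 * \<sigma>2 (\<phi> k w) + C2)"
    \<comment> \<open>step size and Lyapunov weight\<close>
    and alpha_pos: "\<alpha> > 0"
    and cond1: "(1 + \<gamma>\<^sup>2 * A1) * (1 + \<alpha> * A2) / (1 + \<gamma> * \<mu>)\<^sup>2 < 1"
    and cond2: "\<gamma>\<^sup>2 * B1 * (1 + \<alpha> * A2) / (\<alpha> * (1 + \<gamma> * \<mu>)\<^sup>2) + B2 < 1"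
    and theta_def: "\<theta> = max ((1 + \<gamma>\<^sup>2 * A1) * (1 + \<alpha> * A2) / (1 + \<gamma> * \<mu>)\<^sup>2)
                            (\<gamma>\<^sup>2 * B1 * (1 + \<alpha> * A2) / (\<alpha> * (1 + \<gamma> * \<mu>)\<^sup>2) + B2)"
    and zeta_def: "\<zeta> = \<gamma>\<^sup>2 * C1 * (1 + \<alpha> * A2) / (1 + \<gamma> * \<mu>)\<^sup>2 + \<alpha> * C2"
  shows "0 \<le> \<theta> \<and> \<theta> < 1 \<and> 0 \<le> \<zeta> \<and>
    (\<forall>k. (\<integral>\<^sup>+ w. ennreal ((norm (x k w - xs))\<^sup>2 + \<alpha> * \<sigma>2 (\<phi> k w)) \<partial>M)
        \<le> ennreal (\<theta> ^ k * ((norm (x0 - xs))\<^sup>2 + \<alpha> * \<sigma>2 \<phi>0) + \<zeta> / (1 - \<theta>)))"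
proof -
  interpret P: prob_space M by (rule M)
  interpret PD: prob_space D by (rule D)
  note [measurable] = x_meas phi_meas h_meas xi_meas sigma_meas
  have gxs_meas[measurable]: "\<And>y. (\<lambda>s. g s y) \<in> borel_measurable D"
    using g_int by (rule borel_measurable_integrable)
  have xi_sp: "\<And>k w. w \<in> space M \<Longrightarrow> \<xi> k w \<in> space D"
    using xi_meas by (meson measurable_space)
  have G0: "(\<integral>s. g s xs \<partial>D) = 0"
    using interchange[of xs] by (rule grad_zero_at_min) (metis order.strict_implies_order order_refl xs_min)
  have contr: "\<And>k w. w \<in> space M \<Longrightarrow> (1 + \<gamma> * \<mu>)\<^sup>2 * (norm (x (Suc k) w - xs))\<^sup>2
      \<le> (norm ((x k w - xs) + \<gamma> *\<^sub>R (h k w - g (\<xi> k w) xs)))\<^sup>2"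
  proof -
    fix k w assume w: "w \<in> space M"
    define s where "s = \<xi> k w"
    have s: "s \<in> space D" using xi_sp[OF w] by (simp add: s_def)
    define p where "p = x (Suc k) w"
    have opt: "(x k w + \<gamma> *\<^sub>R h k w) - p = \<gamma> *\<^sub>R g s p"
      unfolding p_def x_step[OF w] s_def[symmetric]
      by (rule prox_opt[OF grad[OF s] strong[OF s] mu_pos gamma_pos])
    have mono: "inner (p - xs) (g s p - g s xs) \<ge> \<mu> * (norm (p - xs))\<^sup>2"
    proof -
      have "f s xs + inner (g s xs) (p - xs) + \<mu> / 2 * (norm (p - xs))\<^sup>2 \<le> f s p" by (rule strong[OF s])
      moreover have "f s p + inner (g s p) (xs - p) + \<mu> / 2 * (norm (xs - p))\<^sup>2 \<le> f s xs" by (rule strong[OF s])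
      moreover have "norm (xs - p) = norm (p - xs)" by (rule norm_minus_commute)
      moreover have "inner (g s p) (xs - p) = - inner (g s p) (p - xs)"
        by (simp add: inner_diff_right)
      ultimately show ?thesis by (simp add: inner_diff_right inner_diff_left inner_commute algebra_simps)
    qed
    have "(1 + \<gamma> * \<mu>)\<^sup>2 * (norm (p - xs))\<^sup>2 \<le> (norm ((p - xs) + \<gamma> *\<^sub>R (g s p - g s xs)))\<^sup>2"
      by (rule contraction_alg[OF mono mu_pos gamma_pos])
    moreover have "(p - xs) + \<gamma> *\<^sub>R (g s p - g s xs) = (x k w - xs) + \<gamma> *\<^sub>R (h k w - g s xs)"
      using opt by (simp add: algebra_simps)
    ultimately have "(1 + \<gamma> * \<mu>)\<^sup>2 * (norm (p - xs))\<^sup>2 \<le> (norm ((x k w - xs) + \<gamma> *\<^sub>R (h k w - g s xs)))\<^sup>2"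
      by metis
    then show "(1 + \<gamma> * \<mu>)\<^sup>2 * (norm (x (Suc k) w - xs))\<^sup>2
      \<le> (norm ((x k w - xs) + \<gamma> *\<^sub>R (h k w - g (\<xi> k w) xs)))\<^sup>2"
      by (simp only: p_def s_def)
  qed
  have indep: "P.indep_var borel (\<lambda>w. u1 (\<xi> k w)) borel (\<lambda>w. u2 (x k w))"
    if u1[measurable]: "u1 \<in> borel_measurable D" and u2[measurable]: "(u2 :: 'a \<Rightarrow> real) \<in> borel_measurable borel"
    for k and u1 :: "'xi \<Rightarrow> real" and u2
  proof -
    let ?Y = "\<lambda>w. u1 (\<xi> k w)" and ?X = "\<lambda>w. u2 (x k w)"
    have sY: "sigma_sets (space M) {?Y -` A \<inter> space M | A. A \<in> sets borel} = {?Y -` A \<inter> space M | A. A \<in> sets borel}"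
    proof -
      have "?Y \<in> space M \<rightarrow> space borel" by simp
      then have "sets (vimage_algebra (space M) ?Y borel) = {?Y -` A \<inter> space M | A. A \<in> sets borel}"
        by (rule sets_vimage_algebra2)
      then show ?thesis by (rule trans[OF sets_vimage_algebra[symmetric]])
    qed
    have subY: "{?Y -` A \<inter> space M | A. A \<in> sets (borel::real measure)} \<subseteq> {\<xi> k -` A \<inter> space M | A. A \<in> sets D}"
    proof
      fix B assume "B \<in> {?Y -` A \<inter> space M | A. A \<in> sets (borel::real measure)}"
      then obtain A where A: "A \<in> sets (borel::real measure)" and B: "B = ?Y -` A \<inter> space M" by auto
      have "B = \<xi> k -` (u1 -` A \<inter> space D) \<inter> space M" using B xi_sp by auto
      moreover have "u1 -` A \<inter> space D \<in> sets D" using A by (rule measurable_sets[OF u1])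
      ultimately show "B \<in> {\<xi> k -` A \<inter> space M | A. A \<in> sets D}" by blast
    qed
    have subX: "sigma_sets (space M) {?X -` A \<inter> space M | A. A \<in> sets (borel::real measure)} \<subseteq> past_events M D x \<phi> \<xi> h k"
      unfolding past_events_def
    proof (rule sigma_sets_mono, rule subsetI)
      fix B assume "B \<in> {?X -` A \<inter> space M | A. A \<in> sets (borel::real measure)}"
      then obtain A where A: "A \<in> sets (borel::real measure)" and B: "B = ?X -` A \<inter> space M" by auto
      have "B = x k -` (u2 -` A) \<inter> space M" using B by auto
      moreover have "u2 -` A \<in> sets borel" using measurable_sets[OF u2 A] by simp
      ultimately show "B \<in> sigma_sets (space M) ((\<Union>j\<le>k. {x j -` A \<inter> space M | A. A \<in> sets borel})
        \<union> (\<Union>j\<le>k. {\<phi> j -` A \<inter> space M | A. A \<in> sets borel})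
        \<union> (\<Union>j<k. {\<xi> j -` A \<inter> space M | A. A \<in> sets D})
        \<union> (\<Union>j<k. {h j -` A \<inter> space M | A. A \<in> sets borel}))"
        by (intro sigma_sets.Basic UnI1 UN_I[of k]) auto
    qed
    have "P.indep_set {\<xi> k -` A \<inter> space M | A. A \<in> sets D} (past_events M D x \<phi> \<xi> h k)"
      by (rule xi_indep)
    then have "P.indep_set (sigma_sets (space M) {?Y -` A \<inter> space M | A. A \<in> sets borel})
         (sigma_sets (space M) {?X -` A \<inter> space M | A. A \<in> sets borel})"
      unfolding sY by (rule P.indep_set_mono'[OF _ subY subX])
    then show ?thesis
      by (intro P.indep_var_from_sets) auto
  qed
  have step: "\<And>k. integrable M (\<lambda>w. (norm (x k w - xs))\<^sup>2) \<Longrightarrow> integrable M (\<lambda>w. \<sigma>2 (\<phi> k w)) \<Longrightarrow>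
     integrable M (\<lambda>w. (norm (x (Suc k) w - xs))\<^sup>2) \<and> integrable M (\<lambda>w. \<sigma>2 (\<phi> (Suc k) w)) \<and>
     (\<integral>w. (norm (x (Suc k) w - xs))\<^sup>2 \<partial>M) + \<alpha> * (\<integral>w. \<sigma>2 (\<phi> (Suc k) w) \<partial>M)
       \<le> \<theta> * ((\<integral>w. (norm (x k w - xs))\<^sup>2 \<partial>M) + \<alpha> * (\<integral>w. \<sigma>2 (\<phi> k w) \<partial>M)) + \<zeta>"
  proof -
    fix k
    assume iE: "integrable M (\<lambda>w. (norm (x k w - xs))\<^sup>2)" and iS: "integrable M (\<lambda>w. \<sigma>2 (\<phi> k w))"
    define E where "E = (\<integral>w. (norm (x k w - xs))\<^sup>2 \<partial>M)"
    define S where "S = (\<integral>w. \<sigma>2 (\<phi> k w) \<partial>M)"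
    have E0: "0 \<le> E" unfolding E_def by simp
    have S0: "0 \<le> S" unfolding S_def using sigma_nonneg by simp
    define a where "a = (\<lambda>w. x k w - xs)"
    define gk where "gk = (\<lambda>w. g (\<xi> k w) xs)"
    define d where "d = (\<lambda>w. h k w - gk w)"
    have [measurable]: "a \<in> borel_measurable M" "gk \<in> borel_measurable M" "d \<in> borel_measurable M"
      unfolding a_def gk_def d_def by measurable
    define F where "F = gen_alg M (\<lambda>w. (x k w, \<phi> k w))"
    interpret SF: sigma_finite_subalgebra M F
      unfolding F_def by (rule gen_alg_sfs[OF M]) measurable
    have iB: "integrable M (\<lambda>w. A1 * (norm (x k w - xs))\<^sup>2 + B1 * \<sigma>2 (\<phi> k w) + C1)"
      using iE iS by simp
    have "(\<integral>\<^sup>+w. ennreal ((norm (d w))\<^sup>2) \<partial>M) = (\<integral>\<^sup>+w. nn_cond_exp M F (\<lambda>w. ennreal ((norm (d w))\<^sup>2)) w \<partial>M)"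
      using SF.nn_cond_exp_intg[of "\<lambda>_. 1" "\<lambda>w. ennreal ((norm (d w))\<^sup>2)"] by simp
    also have "\<dots> \<le> (\<integral>\<^sup>+w. ennreal (A1 * (norm (x k w - xs))\<^sup>2 + B1 * \<sigma>2 (\<phi> k w) + C1) \<partial>M)"
      using ass_ii[of k] unfolding d_def gk_def F_def by (intro nn_integral_mono_AE) auto
    also have "\<dots> = ennreal (A1 * E + B1 * S + C1)"
      using iB iE iS consts_nonneg sigma_nonneg
      by (subst nn_integral_eq_integral) (auto simp: E_def S_def P.prob_space)
    finally have dB: "(\<integral>\<^sup>+w. ennreal ((norm (d w))\<^sup>2) \<partial>M) \<le> ennreal (A1 * E + B1 * S + C1)" .
    have ABC0: "0 \<le> A1 * E + B1 * S + C1" using consts_nonneg E0 S0 by simp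
    have id2: "integrable M (\<lambda>w. (norm (d w))\<^sup>2)" and Dd: "(\<integral>w. (norm (d w))\<^sup>2 \<partial>M) \<le> A1 * E + B1 * S + C1"
      using nn_to_int[OF _ _ dB ABC0] by auto
    have ia2: "integrable M (\<lambda>w. (norm (a w))\<^sup>2)" using iE by (simp add: a_def)
    have iad_e: "integrable M (\<lambda>w. inner (a w) e * inner (d w) e)" if e: "e \<in> Basis" for e
    proof (rule Bochner_Integration.integrable_bound[of _ "\<lambda>w. (norm (a w))\<^sup>2 + (norm (d w))\<^sup>2"])
      show "integrable M (\<lambda>w. (norm (a w))\<^sup>2 + (norm (d w))\<^sup>2)" using ia2 id2 by simp
      show "(\<lambda>w. inner (a w) e * inner (d w) e) \<in> borel_measurable M" by measurable
      show "AE w in M. norm (inner (a w) e * inner (d w) e) \<le> norm ((norm (a w))\<^sup>2 + (norm (d w))\<^sup>2)"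
      proof (rule AE_I2)
        fix w
        have 1: "\<bar>inner (a w) e\<bar> \<le> norm (a w)" "\<bar>inner (d w) e\<bar> \<le> norm (d w)"
          using e by (auto intro: Basis_le_norm)
        have "\<bar>inner (a w) e * inner (d w) e\<bar> \<le> norm (a w) * norm (d w)"
          unfolding abs_mult using 1 by (intro mult_mono) auto
        also have "\<dots> \<le> (norm (a w))\<^sup>2 + (norm (d w))\<^sup>2"
          by (smt (verit) norm_ge_zero power2_eq_square mult_mono sum_squares_bound)
        finally show "norm (inner (a w) e * inner (d w) e) \<le> norm ((norm (a w))\<^sup>2 + (norm (d w))\<^sup>2)" by simp
      qed
    qed
    have cross_e: "(\<integral>w. inner (a w) e * inner (d w) e \<partial>M) = 0" if e: "e \<in> Basis" for e
    proof -
      have ia_e: "integrable M (\<lambda>w. inner (a w) e)"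
      proof (rule Bochner_Integration.integrable_bound[of _ "\<lambda>w. 1 + (norm (a w))\<^sup>2"])
        show "integrable M (\<lambda>w. 1 + (norm (a w))\<^sup>2)" using ia2 by simp
        show "(\<lambda>w. inner (a w) e) \<in> borel_measurable M" by measurable
        show "AE w in M. norm (inner (a w) e) \<le> norm (1 + (norm (a w))\<^sup>2)"
        proof (rule AE_I2)
          fix w
          have "\<bar>inner (a w) e\<bar> \<le> norm (a w)" using e by (rule Basis_le_norm)
          also have "\<dots> \<le> 1 + (norm (a w))\<^sup>2" by (rule le_one_plus_sq)
          finally show "norm (inner (a w) e) \<le> norm (1 + (norm (a w))\<^sup>2)" by simp
        qed
      qed
      have igD: "integrable D (\<lambda>s. inner (g s xs) e)"
        using g_int[of xs] by (rule integrable_inner_left)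
      have ig_e: "integrable M (\<lambda>w. inner (gk w) e)"
      proof -
        have "integrable (distr M D (\<xi> k)) (\<lambda>s. inner (g s xs) e)" using igD xi_distr[of k] by simp
        then show ?thesis by (subst (asm) integrable_distr_eq) (auto simp: gk_def)
      qed
      have Eg: "(\<integral>w. inner (gk w) e \<partial>M) = 0"
      proof -
        have "(\<integral>w. inner (gk w) e \<partial>M) = (\<integral>s. inner (g s xs) e \<partial>(distr M D (\<xi> k)))"
          by (subst integral_distr) (auto simp: gk_def)
        also have "\<dots> = (\<integral>s. inner (g s xs) e \<partial>D)" using xi_distr[of k] by simp
        also have "\<dots> = inner (\<integral>s. g s xs \<partial>D) e" using g_int[of xs] by simp
        finally show ?thesis using G0 by simp
      qed
      have "P.indep_var borel (\<lambda>w. (\<lambda>s. inner (g s xs) e) (\<xi> k w)) borel (\<lambda>w. (\<lambda>v. inner (v - xs) e) (x k w))"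
        by (rule indep) measurable
      then have ind: "P.indep_var borel (\<lambda>w. inner (gk w) e) borel (\<lambda>w. inner (a w) e)"
        by (simp add: gk_def a_def)
      have igm: "integrable M (\<lambda>w. inner (gk w) e * inner (a w) e)"
        by (rule P.indep_var_integrable[OF ind ig_e ia_e])
      have Egm: "(\<integral>w. inner (gk w) e * inner (a w) e \<partial>M) = 0"
        using P.indep_var_lebesgue_integral[OF ind ig_e ia_e] Eg by simp
      have hsplit: "\<And>w. inner (a w) e * inner (h k w) e = inner (a w) e * inner (d w) e + inner (gk w) e * inner (a w) e"
        by (simp add: d_def inner_diff_left algebra_simps)
      have ih: "integrable M (\<lambda>w. inner (a w) e * inner (h k w) e)"
        unfolding hsplit using iad_e[OF e] igm by simp
      have aF: "(\<lambda>w. inner (a w) e) \<in> borel_measurable F"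
      proof -
        have "(\<lambda>w. (\<lambda>q::'a \<times> 'c. inner (fst q - xs) e) (x k w, \<phi> k w)) \<in> borel_measurable (gen_alg M (\<lambda>w. (x k w, \<phi> k w)))"
          by (rule gen_alg_meas) (rule test_cont)
        then show ?thesis by (simp add: F_def a_def)
      qed
      have Eh: "(\<integral>w. inner (a w) e * inner (h k w) e \<partial>M) = 0"
      proof -
        have "(\<integral>w. inner (a w) e * inner (h k w) e \<partial>M) = (\<integral>w. inner (a w) e * real_cond_exp M F (\<lambda>w. inner (h k w) e) w \<partial>M)"
          by (rule SF.real_cond_exp_intg(2)[OF ih aF, symmetric]) measurable
        also have "\<dots> = (\<integral>w. 0 \<partial>M)"
          using ass_i[OF e, of k] unfolding F_def[symmetric]
          by (intro integral_cong_AE) (auto simp: F_def)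
        finally show ?thesis by simp
      qed
      have "(\<integral>w. inner (a w) e * inner (d w) e \<partial>M)
          = (\<integral>w. inner (a w) e * inner (h k w) e - inner (gk w) e * inner (a w) e \<partial>M)"
        by (simp add: hsplit)
      also have "\<dots> = 0" using ih igm Eh Egm by simp
      finally show ?thesis .
    qed
    have cross: "(\<integral>w. inner (a w) (d w) \<partial>M) = 0"
    proof -
      have "(\<integral>w. inner (a w) (d w) \<partial>M) = (\<integral>w. (\<Sum>e\<in>Basis. inner (a w) e * inner (d w) e) \<partial>M)"
        by (subst euclidean_inner) simp
      also have "\<dots> = (\<Sum>e\<in>Basis. (\<integral>w. inner (a w) e * inner (d w) e \<partial>M))"
        using iad_e by simp
      also have "\<dots> = 0" using cross_e by simp
      finally show ?thesis .
    qed
    have iad: "integrable M (\<lambda>w. inner (a w) (d w))"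
      by (subst euclidean_inner) (use iad_e in auto)
    have expand: "\<And>w. (norm (a w + \<gamma> *\<^sub>R d w))\<^sup>2 = (norm (a w))\<^sup>2 + 2 * \<gamma> * inner (a w) (d w) + \<gamma>\<^sup>2 * (norm (d w))\<^sup>2"
      unfolding power2_norm_eq_inner
      by (simp add: inner_add_left inner_add_right inner_commute[of "d _" "a _"] power2_eq_square algebra_simps)
    have iN: "integrable M (\<lambda>w. (norm (a w + \<gamma> *\<^sub>R d w))\<^sup>2)"
      unfolding expand using ia2 id2 iad by simp
    have intN: "(\<integral>w. (norm (a w + \<gamma> *\<^sub>R d w))\<^sup>2 \<partial>M) = E + \<gamma>\<^sup>2 * (\<integral>w. (norm (d w))\<^sup>2 \<partial>M)"
      unfolding expand using ia2 id2 iad cross by (simp add: E_def a_def)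
    define c where "c = (1 + \<gamma> * \<mu>)\<^sup>2"
    have c1: "c \<ge> 1" unfolding c_def using gamma_pos mu_pos
      by (simp add: one_le_power)
    have ptw: "\<And>w. w \<in> space M \<Longrightarrow> (norm (x (Suc k) w - xs))\<^sup>2 \<le> (norm (a w + \<gamma> *\<^sub>R d w))\<^sup>2 / c"
    proof -
      fix w assume w: "w \<in> space M"
      have "c * (norm (x (Suc k) w - xs))\<^sup>2 \<le> (norm (a w + \<gamma> *\<^sub>R d w))\<^sup>2"
        using contr[OF w, of k] unfolding a_def d_def gk_def c_def .
      moreover have "c > 0" using c1 by simp
      ultimately show "(norm (x (Suc k) w - xs))\<^sup>2 \<le> (norm (a w + \<gamma> *\<^sub>R d w))\<^sup>2 / c"
        by (simp add: pos_le_divide_eq mult.commute)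
    qed
    have iE': "integrable M (\<lambda>w. (norm (x (Suc k) w - xs))\<^sup>2)"
      by (rule Bochner_Integration.integrable_bound[of _ "\<lambda>w. (norm (a w + \<gamma> *\<^sub>R d w))\<^sup>2 / c"])
         (use iN ptw c1 in \<open>auto intro!: AE_I2\<close>)
    define E' where "E' = (\<integral>w. (norm (x (Suc k) w - xs))\<^sup>2 \<partial>M)"
    have E'0: "0 \<le> E'" unfolding E'_def by simp
    have E'b: "E' \<le> (E + \<gamma>\<^sup>2 * (A1 * E + B1 * S + C1)) / c"
    proof -
      have "E' \<le> (\<integral>w. (norm (a w + \<gamma> *\<^sub>R d w))\<^sup>2 / c \<partial>M)"
        unfolding E'_def using iE' iN ptw by (intro integral_mono) auto
      also have "\<dots> = (E + \<gamma>\<^sup>2 * (\<integral>w. (norm (d w))\<^sup>2 \<partial>M)) / c" using intN by simp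
      also have "\<dots> \<le> (E + \<gamma>\<^sup>2 * (A1 * E + B1 * S + C1)) / c"
        using Dd c1 by (intro divide_right_mono add_left_mono mult_left_mono) auto
      finally show ?thesis .
    qed
    define F' where "F' = gen_alg M (\<lambda>w. (x (Suc k) w, \<phi> k w))"
    interpret SF': sigma_finite_subalgebra M F'
      unfolding F'_def by (rule gen_alg_sfs[OF M]) measurable
    have iB': "integrable M (\<lambda>w. A2 * (norm (x (Suc k) w - xs))\<^sup>2 + B2 * \<sigma>2 (\<phi> k w) + C2)"
      using iE' iS by simp
    have "(\<integral>\<^sup>+w. ennreal (\<sigma>2 (\<phi> (Suc k) w)) \<partial>M) = (\<integral>\<^sup>+w. nn_cond_exp M F' (\<lambda>w. ennreal (\<sigma>2 (\<phi> (Suc k) w))) w \<partial>M)"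
      using SF'.nn_cond_exp_intg[of "\<lambda>_. 1" "\<lambda>w. ennreal (\<sigma>2 (\<phi> (Suc k) w))"] by simp
    also have "\<dots> \<le> (\<integral>\<^sup>+w. ennreal (A2 * (norm (x (Suc k) w - xs))\<^sup>2 + B2 * \<sigma>2 (\<phi> k w) + C2) \<partial>M)"
      using ass_iii[of k] unfolding F'_def by (intro nn_integral_mono_AE) auto
    also have "\<dots> = ennreal (A2 * E' + B2 * S + C2)"
      using iB' iE' iS consts_nonneg sigma_nonneg
      by (subst nn_integral_eq_integral) (auto simp: E'_def S_def P.prob_space)
    finally have sB: "(\<integral>\<^sup>+w. ennreal (\<sigma>2 (\<phi> (Suc k) w)) \<partial>M) \<le> ennreal (A2 * E' + B2 * S + C2)" .
    have ABC0': "0 \<le> A2 * E' + B2 * S + C2" using consts_nonneg E'0 S0 by simp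
    have iS': "integrable M (\<lambda>w. \<sigma>2 (\<phi> (Suc k) w))" and S'b: "(\<integral>w. \<sigma>2 (\<phi> (Suc k) w) \<partial>M) \<le> A2 * E' + B2 * S + C2"
      using nn_to_int[OF _ _ sB ABC0'] sigma_nonneg by auto
    have "E' + \<alpha> * (\<integral>w. \<sigma>2 (\<phi> (Suc k) w) \<partial>M) \<le> \<theta> * (E + \<alpha> * S) + \<zeta>"
    proof -
      define S' where "S' = (\<integral>w. \<sigma>2 (\<phi> (Suc k) w) \<partial>M)"
      define t1 where "t1 = (1 + \<gamma>\<^sup>2 * A1) * (1 + \<alpha> * A2) / (1 + \<gamma> * \<mu>)\<^sup>2"
      define t2 where "t2 = \<gamma>\<^sup>2 * B1 * (1 + \<alpha> * A2) / (\<alpha> * (1 + \<gamma> * \<mu>)\<^sup>2) + B2"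
      have th: "\<theta> = max t1 t2" unfolding theta_def t1_def t2_def ..
      have cpos: "c > 0" using c1 by simp
      have s1: "\<alpha> * S' \<le> \<alpha> * (A2 * E' + B2 * S + C2)"
        using S'b alpha_pos unfolding S'_def by (intro mult_left_mono) auto
      have s2: "(1 + \<alpha> * A2) * E' \<le> (1 + \<alpha> * A2) * ((E + \<gamma>\<^sup>2 * (A1 * E + B1 * S + C1)) / c)"
        using E'b alpha_pos consts_nonneg by (intro mult_left_mono) auto
      have s3: "(1 + \<alpha> * A2) * ((E + \<gamma>\<^sup>2 * (A1 * E + B1 * S + C1)) / c) + \<alpha> * B2 * S + \<alpha> * C2
          = t1 * E + (\<alpha> * t2) * S + \<zeta>"
        unfolding t1_def t2_def zeta_def c_def[symmetric] by (rule s3alg[OF cpos alpha_pos])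
      have s4: "t1 * E \<le> \<theta> * E" using E0 th by (intro mult_right_mono) auto
      have s5: "(\<alpha> * t2) * S \<le> (\<alpha> * \<theta>) * S" using S0 th alpha_pos by (intro mult_right_mono mult_left_mono) auto
      have "E' + \<alpha> * S' \<le> (1 + \<alpha> * A2) * E' + \<alpha> * B2 * S + \<alpha> * C2"
        using s1 by (simp add: algebra_simps)
      also have "\<dots> \<le> t1 * E + (\<alpha> * t2) * S + \<zeta>" using s2 s3 by linarith
      also have "\<dots> \<le> \<theta> * (E + \<alpha> * S) + \<zeta>" using s4 s5 by (simp add: algebra_simps)
      finally show ?thesis unfolding S'_def .
    qed
    then show "?thesis k" using iE' iS' by (simp add: E_def S_def E'_def)
  qed
  have t2ge: "\<gamma>\<^sup>2 * B1 * (1 + \<alpha> * A2) / (\<alpha> * (1 + \<gamma> * \<mu>)\<^sup>2) \<ge> 0"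
    using consts_nonneg alpha_pos by simp
  have th0: "0 \<le> \<theta>" unfolding theta_def using t2ge consts_nonneg by linarith
  have th1: "\<theta> < 1" unfolding theta_def using cond1 cond2 by simp
  have ze0: "0 \<le> \<zeta>" unfolding zeta_def using consts_nonneg alpha_pos by simp
  define \<Psi> where "\<Psi> = (\<lambda>k. (\<integral>w. (norm (x k w - xs))\<^sup>2 \<partial>M) + \<alpha> * (\<integral>w. \<sigma>2 (\<phi> k w) \<partial>M))"
  define \<Psi>0 where "\<Psi>0 = (norm (x0 - xs))\<^sup>2 + \<alpha> * \<sigma>2 \<phi>0"
  have main: "integrable M (\<lambda>w. (norm (x k w - xs))\<^sup>2) \<and> integrable M (\<lambda>w. \<sigma>2 (\<phi> k w)) \<and>
      \<Psi> k \<le> \<theta> ^ k * \<Psi>0 + \<zeta> * (\<Sum>i<k. \<theta> ^ i)" for k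
  proof (induction k)
    case 0
    have e1: "(\<integral>w. (norm (x 0 w - xs))\<^sup>2 \<partial>M) = (\<integral>w. (norm (x0 - xs))\<^sup>2 \<partial>M)"
      by (rule Bochner_Integration.integral_cong) (auto simp: x_init)
    have e2: "(\<integral>w. \<sigma>2 (\<phi> 0 w) \<partial>M) = (\<integral>w. \<sigma>2 \<phi>0 \<partial>M)"
      by (rule Bochner_Integration.integral_cong) (auto simp: phi_init)
    have i1: "integrable M (\<lambda>w. (norm (x 0 w - xs))\<^sup>2)"
      using Bochner_Integration.integrable_cong[OF refl, of M "\<lambda>w. (norm (x 0 w - xs))\<^sup>2" "\<lambda>w. (norm (x0 - xs))\<^sup>2"] by (simp add: x_init)
    have i2: "integrable M (\<lambda>w. \<sigma>2 (\<phi> 0 w))"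
      using Bochner_Integration.integrable_cong[OF refl, of M "\<lambda>w. \<sigma>2 (\<phi> 0 w)" "\<lambda>w. \<sigma>2 \<phi>0"] by (simp add: phi_init)
    show ?case using i1 i2 e1 e2 by (simp add: \<Psi>_def \<Psi>0_def P.prob_space)
  next
    case (Suc k)
    then have "integrable M (\<lambda>w. (norm (x (Suc k) w - xs))\<^sup>2) \<and> integrable M (\<lambda>w. \<sigma>2 (\<phi> (Suc k) w)) \<and>
      \<Psi> (Suc k) \<le> \<theta> * \<Psi> k + \<zeta>"
      using step[of k] unfolding \<Psi>_def by blast
    moreover have "\<theta> * \<Psi> k + \<zeta> \<le> \<theta> * (\<theta> ^ k * \<Psi>0 + \<zeta> * (\<Sum>i<k. \<theta> ^ i)) + \<zeta>"
      using Suc th0 by (intro add_right_mono mult_left_mono) auto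
    moreover have "\<theta> * (\<theta> ^ k * \<Psi>0 + \<zeta> * (\<Sum>i<k. \<theta> ^ i)) + \<zeta> = \<theta> ^ Suc k * \<Psi>0 + \<zeta> * (\<Sum>i<Suc k. \<theta> ^ i)"
    proof -
      have gs: "(\<Sum>i<Suc k. \<theta> ^ i) = 1 + \<theta> * (\<Sum>i<k. \<theta> ^ i)"
        by (simp only: sum.lessThan_Suc_shift) (simp add: sum_distrib_left)
      show ?thesis unfolding gs by (simp add: algebra_simps)
    qed
    ultimately show ?case by linarith
  qed
  have bnd: "(\<integral>\<^sup>+ w. ennreal ((norm (x k w - xs))\<^sup>2 + \<alpha> * \<sigma>2 (\<phi> k w)) \<partial>M)
        \<le> ennreal (\<theta> ^ k * ((norm (x0 - xs))\<^sup>2 + \<alpha> * \<sigma>2 \<phi>0) + \<zeta> / (1 - \<theta>))" for k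
  proof -
    have i1: "integrable M (\<lambda>w. (norm (x k w - xs))\<^sup>2)" and i2: "integrable M (\<lambda>w. \<sigma>2 (\<phi> k w))"
      and pb: "\<Psi> k \<le> \<theta> ^ k * \<Psi>0 + \<zeta> * (\<Sum>i<k. \<theta> ^ i)" using main[of k] by auto
    have "(\<integral>\<^sup>+ w. ennreal ((norm (x k w - xs))\<^sup>2 + \<alpha> * \<sigma>2 (\<phi> k w)) \<partial>M) = ennreal (\<Psi> k)"
      using i1 i2 sigma_nonneg alpha_pos unfolding \<Psi>_def
      by (subst nn_integral_eq_integral) (auto intro!: add_nonneg_nonneg)
    moreover have "(\<Sum>i<k. \<theta> ^ i) \<le> 1 / (1 - \<theta>)"
    proof -
      have "(\<Sum>i<k. \<theta> ^ i) = (1 - \<theta> ^ k) / (1 - \<theta>)" using th1 by (simp add: sum_gp_strict)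
      also have "\<dots> \<le> 1 / (1 - \<theta>)" using th0 th1 by (intro divide_right_mono) auto
      finally show ?thesis .
    qed
    then have "\<zeta> * (\<Sum>i<k. \<theta> ^ i) \<le> \<zeta> / (1 - \<theta>)" using ze0 by (metis mult_left_mono times_divide_eq_right mult_1_right)
    ultimately show ?thesis using pb by (auto simp: \<Psi>0_def intro!: ennreal_leI)
  qed
  show ?thesis using th0 th1 ze0 bnd by blast
qed

end
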